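(* Let $\mathbf{x}_1,\dots,\mathbf{x}_n\in\mathbb{R}^d$ and define $L(\{\boldsymbol\mu_j\}_{j=1}^K,\{y_i\}_{i=1}^n)=\sum_{i=1}^n\|\mathbf{x}_i-\boldsymbol\mu_{y_i}\|_2^2$ for $\boldsymbol\mu_j\in\mathbb{R}^d$, $y_i\in[K]$. Let $\{\boldsymbol\mu_j^\star\},\{\hat{\boldsymbol\mu}_j\}\subseteq\mathbb{R}^d$, $\{y_i^\star\},\{\hat y_i\}\subseteq[K]$, $s=\min_{j\ne k}\|\boldsymbol\mu_j^\star-\boldsymbol\mu_k^\star\|_2$ and $n_{\min}=\min_{j\in[K]}|\{i:y_i^\star=j\}|$. Suppose that for some $C>0$ and $\delta\in(0,s/2)$: (1) $L(\{\hat{\boldsymbol\mu}_j\},\{\hat y_i\})\le C\cdot L(\{\boldsymbol\mu_j^\star\},\{y_i^\star\})$ and $\hat y_i\in\mathrm{argmin}_{j\in[K]}\|\mathbf{x}_i-\hat{\boldsymbol\mu}_j\|_2$ for all $i$; (2) $L(\{\boldsymbol\mu_j^\star\},\{y_i^\star\})\le\delta^2n_{\min}/[(1+\sqrt C)^2K]$. Then there exists a permutation $\tau$ of $[K]$ such that $\sum_{j=1}^K\|\boldsymbol\mu_j^\star-\hat{\boldsymbol\mu}_{\tau(j)}\|_2^2\le\frac{(1+\sqrt C)^2K}{n_{\min}}L(\{\boldsymbol\mu_j^\star\},\{y_i^\star\})$, $\{i:\hat y_i\ne\tau(y_i^\star)\}\subseteq\{i:\|\mathbf{x}_i-\boldsymbol\mu^\star_{y_i^\star}\|_2\ge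 s/2-\delta\}$, and $|\{i:\hat y_i\ne\tau(y_i^\star)\}|\le|\{i:\|\mathbf{x}_i-\boldsymbol\mu^\star_{y_i^\star}\|_2\ge s/2-\delta\}|\le\frac{L(\{\boldsymbol\mu_j^\star\},\{y_i^\star\})}{(s/2-\delta)^2}$. *)

theory Defs
  imports "HOL-Analysis.Analysis" "HOL-Combinatorics.Permutations"
begin

definition kmeans_loss :: "nat \<Rightarrow> (nat \<Rightarrow> 'a::real_normed_vector) \<Rightarrow> (nat \<Rightarrow> 'a) \<Rightarrow> (nat \<Rightarrow> nat) \<Rightarrow> real" where
  "kmeans_loss n x mu y = (\<Sum>i\<in>{1..n}. (norm (x i - mu (y i)))\<^sup>2)"

definition min_sep :: "nat \<Rightarrow> (nat \<Rightarrow> 'a::real_normed_vector) \<Rightarrow> real" where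
  "min_sep K mu = Min {norm (mu j - mu k) | j k. j \<in> {1..K} \<and> k \<in> {1..K} \<and> j \<noteq> k}"

definition min_cluster :: "nat \<Rightarrow> nat \<Rightarrow> (nat \<Rightarrow> nat) \<Rightarrow> nat" where
  "min_cluster n K y = Min {card {i\<in>{1..n}. y i = j} | j. j \<in> {1..K}}"

end

theory Submission
  imports Defs
begin

theorem lemmaD1:
  fixes x mustar muhat :: "nat \<Rightarrow> 'a::euclidean_space"
    and ystar yhat :: "nat \<Rightarrow> nat"
    and n K :: nat and C \<delta> :: real
  defines "s \<equiv> min_sep K mustar"
    and "nmin \<equiv> min_cluster n K ystar"
    and "Lstar \<equiv> kmeans_loss n x mustar ystar"
  assumes K2: "K \<ge> 2"
    and ystar_range: "\<forall>i\<in>{1..n}. ystar i \<in> {1..K}"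
    and yhat_range: "\<forall>i\<in>{1..n}. yhat i \<in> {1..K}"
    and nmin_pos: "nmin > 0"
    and C_pos: "C > 0"
    and delta: "0 < \<delta>" "\<delta> < s / 2"
    and cond1a: "kmeans_loss n x muhat yhat \<le> C * Lstar"
    and cond1b: "\<forall>i\<in>{1..n}. \<forall>j\<in>{1..K}. norm (x i - muhat (yhat i)) \<le> norm (x i - muhat j)"
    and cond2: "Lstar \<le> \<delta>\<^sup>2 * real nmin / ((1 + sqrt C)\<^sup>2 * real K)"
  shows "\<exists>\<tau>. \<tau> permutes {1..K} \<and>
    (\<Sum>j\<in>{1..K}. (norm (mustar j - muhat (\<tau> j)))\<^sup>2) \<le> (1 + sqrt C)\<^sup>2 * real K / real nmin * Lstar \<and>
    {i\<in>{1..n}. yhat i \<noteq> \<tau> (ystar i)} \<subseteq> {i\<in>{1..n}. norm (x i - mustar (ystar i)) \<ge> s / 2 - \<delta>} \<and>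
    card {i\<in>{1..n}. yhat i \<noteq> \<tau> (ystar i)} \<le> card {i\<in>{1..n}. norm (x i - mustar (ystar i)) \<ge> s / 2 - \<delta>} \<and>
    real (card {i\<in>{1..n}. norm (x i - mustar (ystar i)) \<ge> s / 2 - \<delta>}) \<le> Lstar / (s / 2 - \<delta>)\<^sup>2"
proof -
  define c where "c = sqrt C"
  have c_pos: "c > 0" using C_pos by (simp add: c_def)
  have Cc: "C = c\<^sup>2" using C_pos by (simp add: c_def)
  define P where "P = (1 + c)\<^sup>2"
  have P_pos: "P > 0" using c_pos by (simp add: P_def)
  have Lstar_nn: "Lstar \<ge> 0" unfolding Lstar_def kmeans_loss_def by (simp add: sum_nonneg)
  have Kpos: "real K > 0" using K2 by simp
  have nmin_r: "real nmin > 0" using nmin_pos by simp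
  have nmin_le: "nmin \<le> card {i\<in>{1..n}. ystar i = j}" if "j \<in> {1..K}" for j
  proof -
    have "finite {card {i\<in>{1..n}. ystar i = j} | j. j \<in> {1..K}}" by simp
    moreover have "card {i\<in>{1..n}. ystar i = j} \<in> {card {i\<in>{1..n}. ystar i = j} | j. j \<in> {1..K}}"
      using that by blast
    ultimately show ?thesis unfolding nmin_def min_cluster_def by (rule Min_le)
  qed
  have s_le: "s \<le> norm (mustar j - mustar k)" if "j \<in> {1..K}" "k \<in> {1..K}" "j \<noteq> k" for j k
  proof -
    have "finite {norm (mustar j - mustar k) | j k. j \<in> {1..K} \<and> k \<in> {1..K} \<and> j \<noteq> k}"
    proof -
      have "{norm (mustar j - mustar k) | j k. j \<in> {1..K} \<and> k \<in> {1..K} \<and> j \<noteq> k}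
          \<subseteq> (\<lambda>(j,k). norm (mustar j - mustar k)) ` ({1..K} \<times> {1..K})" by auto
      thus ?thesis by (rule finite_subset) simp
    qed
    moreover have "norm (mustar j - mustar k) \<in> {norm (mustar j - mustar k) | j k. j \<in> {1..K} \<and> k \<in> {1..K} \<and> j \<noteq> k}"
      using that by blast
    ultimately show ?thesis unfolding s_def min_sep_def by (rule Min_le)
  qed
  have ex_min: "\<exists>k\<in>{1..K}. \<forall>l\<in>{1..K}. norm (mustar j - muhat k) \<le> norm (mustar j - muhat l)" for j
  proof -
    have ne: "(\<lambda>l. norm (mustar j - muhat l)) ` {1..K} \<noteq> {}" using K2 by auto
    have "Min ((\<lambda>l. norm (mustar j - muhat l)) ` {1..K}) \<in> (\<lambda>l. norm (mustar j - muhat l)) ` {1..K}"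
      using ne by (intro Min_in) auto
    then obtain k where k: "k \<in> {1..K}" "norm (mustar j - muhat k) = Min ((\<lambda>l. norm (mustar j - muhat l)) ` {1..K})"
      by auto
    show ?thesis using k by (intro bexI[of _ k]) auto
  qed
  define t0 where "t0 j = (SOME k. k\<in>{1..K} \<and> (\<forall>l\<in>{1..K}. norm (mustar j - muhat k) \<le> norm (mustar j - muhat l)))" for j
  have t0: "t0 j \<in> {1..K} \<and> (\<forall>l\<in>{1..K}. norm (mustar j - muhat (t0 j)) \<le> norm (mustar j - muhat l))" for j
    unfolding t0_def using someI_ex[OF ex_min[of j, unfolded Bex_def]] by blast
  define \<tau> where "\<tau> j = (if j \<in> {1..K} then t0 j else j)" for j
  have tau_in: "\<tau> j \<in> {1..K}" if "j \<in> {1..K}" for j using t0 that by (simp add: \<tau>_def)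
  have tau_min: "norm (mustar j - muhat (\<tau> j)) \<le> norm (mustar j - muhat l)" if "j \<in> {1..K}" "l \<in> {1..K}" for j l
    using t0 that by (simp add: \<tau>_def)
  define D where "D i = norm (mustar (ystar i) - muhat (yhat i))" for i
  define a where "a i = norm (x i - mustar (ystar i))" for i
  define b where "b i = norm (x i - muhat (yhat i))" for i
  have Dab: "(D i)\<^sup>2 \<le> (1 + c) * (a i)\<^sup>2 + (1 + 1/c) * (b i)\<^sup>2" for i
  proof -
    have "D i \<le> a i + b i" unfolding D_def a_def b_def
      using norm_triangle_ineq4[of "x i - muhat (yhat i)" "x i - mustar (ystar i)"]
      by (simp add: norm_minus_commute)
    moreover have "0 \<le> D i" by (simp add: D_def)
    ultimately have "(D i)\<^sup>2 \<le> (a i + b i)\<^sup>2" by (simp add: power_mono)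
    also have "\<dots> \<le> (1 + c) * (a i)\<^sup>2 + (1 + 1/c) * (b i)\<^sup>2"
    proof -
      have "0 \<le> (c * a i - b i)\<^sup>2 / c" using c_pos by simp
      hence "0 \<le> c * (a i)\<^sup>2 - 2 * a i * b i + (b i)\<^sup>2 / c" using c_pos
        by (simp add: power2_eq_square field_simps)
      thus ?thesis by (simp add: power2_eq_square field_simps)
    qed
    finally show ?thesis .
  qed
  have sumD: "(\<Sum>i\<in>{1..n}. (D i)\<^sup>2) \<le> P * Lstar"
  proof -
    have "(\<Sum>i\<in>{1..n}. (D i)\<^sup>2) \<le> (\<Sum>i\<in>{1..n}. (1 + c) * (a i)\<^sup>2 + (1 + 1/c) * (b i)\<^sup>2)"
      by (rule sum_mono) (rule Dab)
    also have "\<dots> = (1 + c) * Lstar + (1 + 1/c) * kmeans_loss n x muhat yhat"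
      unfolding Lstar_def kmeans_loss_def a_def b_def by (simp add: sum.distrib sum_distrib_left)
    also have "\<dots> \<le> (1 + c) * Lstar + (1 + 1/c) * (C * Lstar)"
      using cond1a c_pos by (intro add_left_mono mult_left_mono) auto
    also have "\<dots> = P * Lstar" unfolding P_def Cc using c_pos
      by (simp add: power2_eq_square field_simps)
    finally show ?thesis .
  qed
  define m where "m j = (norm (mustar j - muhat (\<tau> j)))\<^sup>2" for j
  have clus: "real (card {i\<in>{1..n}. ystar i = j}) * m j \<le> (\<Sum>i\<in>{i\<in>{1..n}. ystar i = j}. (D i)\<^sup>2)"
    if j: "j \<in> {1..K}" for j
  proof (rule sum_bounded_below)
    fix i assume "i \<in> {i\<in>{1..n}. ystar i = j}"
    hence i: "i \<in> {1..n}" "ystar i = j" by auto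
    have "norm (mustar j - muhat (\<tau> j)) \<le> D i"
      unfolding D_def using i tau_min[OF j] yhat_range by auto
    thus "m j \<le> (D i)\<^sup>2"
      by (simp add: m_def power_mono)
  qed
  have summ: "(\<Sum>j\<in>{1..K}. m j) \<le> P * Lstar / real nmin"
  proof -
    have "real nmin * (\<Sum>j\<in>{1..K}. m j) = (\<Sum>j\<in>{1..K}. real nmin * m j)"
      by (simp add: sum_distrib_left)
    also have "\<dots> \<le> (\<Sum>j\<in>{1..K}. real (card {i\<in>{1..n}. ystar i = j}) * m j)"
      using nmin_le by (intro sum_mono mult_right_mono) (auto simp: m_def)
    also have "\<dots> \<le> (\<Sum>j\<in>{1..K}. (\<Sum>i\<in>{i\<in>{1..n}. ystar i = j}. (D i)\<^sup>2))"
      using clus by (intro sum_mono) auto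
    also have "\<dots> = (\<Sum>i\<in>{1..n}. (D i)\<^sup>2)"
      using ystar_range by (intro sum.group) auto
    also have "\<dots> \<le> P * Lstar" by (rule sumD)
    finally show ?thesis using nmin_r by (simp add: field_simps)
  qed
  have PL: "P * Lstar / real nmin \<le> \<delta>\<^sup>2 / real K"
    using cond2 P_pos Kpos nmin_r unfolding P_def[symmetric] c_def[symmetric]
    by (simp add: field_simps)
  have m_small: "norm (mustar j - muhat (\<tau> j)) \<le> \<delta>" if "j \<in> {1..K}" for j
  proof -
    have "m j \<le> (\<Sum>j\<in>{1..K}. m j)"
      using that by (intro member_le_sum) (auto simp: m_def)
    also have "\<dots> \<le> \<delta>\<^sup>2 / real K" using summ PL by linarith
    also have "\<dots> \<le> \<delta>\<^sup>2" proof -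
      have "\<delta>\<^sup>2 * 1 \<le> \<delta>\<^sup>2 * real K" using K2 by (intro mult_left_mono) auto
      thus ?thesis using Kpos by (simp add: divide_le_eq)
    qed
    finally have "(norm (mustar j - muhat (\<tau> j)))\<^sup>2 \<le> \<delta>\<^sup>2" by (simp add: m_def)
    thus ?thesis using delta by (simp add: power2_le_iff_abs_le)
  qed
  have inj: "inj_on \<tau> {1..K}"
  proof (rule inj_onI, rule ccontr)
    fix j k assume j: "j \<in> {1..K}" and k: "k \<in> {1..K}" and eq: "\<tau> j = \<tau> k" and ne: "j \<noteq> k"
    have "norm (mustar j - mustar k) \<le> norm (mustar j - muhat (\<tau> j)) + norm (mustar k - muhat (\<tau> k))"
      using eq norm_triangle_ineq4[of "mustar j - muhat (\<tau> j)" "mustar k - muhat (\<tau> k)"] by simp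
    also have "\<dots> \<le> 2 * \<delta>" using m_small[OF j] m_small[OF k] by linarith
    finally show False using s_le[OF j k ne] delta by simp
  qed
  have img: "\<tau> ` {1..K} = {1..K}"
    using tau_in inj by (intro endo_inj_surj) auto
  have perm: "\<tau> permutes {1..K}"
  proof (rule bij_imp_permutes)
    show "bij_betw \<tau> {1..K} {1..K}" using inj img by (simp add: bij_betw_def)
    show "\<tau> x = x" if "x \<notin> {1..K}" for x using that unfolding \<tau>_def by argo
  qed
  define t where "t = s / 2 - \<delta>"
  have t_pos: "t > 0" using delta by (simp add: t_def)
  have sub: "{i\<in>{1..n}. yhat i \<noteq> \<tau> (ystar i)} \<subseteq> {i\<in>{1..n}. norm (x i - mustar (ystar i)) \<ge> s / 2 - \<delta>}"
  proof safe
    fix i assume i: "i \<in> {1..n}" and ne: "yhat i \<noteq> \<tau> (ystar i)"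
    define j where "j = ystar i"
    have j: "j \<in> {1..K}" using ystar_range i by (simp add: j_def)
    have "yhat i \<in> \<tau> ` {1..K}" using img yhat_range i by auto
    then obtain k where k: "k \<in> {1..K}" "yhat i = \<tau> k" by auto
    have jk: "j \<noteq> k" using ne k j_def by auto
    define r where "r = norm (x i - mustar j)"
    have "norm (x i - muhat (\<tau> k)) \<le> norm (x i - muhat (\<tau> j))"
      using cond1b i tau_in[OF j] k(2) by metis
    also have "\<dots> \<le> r + \<delta>"
      using norm_triangle_ineq[of "x i - mustar j" "mustar j - muhat (\<tau> j)"] m_small[OF j]
      unfolding r_def by simp
    finally have A: "norm (x i - muhat (\<tau> k)) \<le> r + \<delta>" .
    have "s \<le> norm (mustar j - mustar k)" using s_le[OF j k(1) jk] .
    also have "\<dots> \<le> norm (mustar j - x i) + norm (x i - muhat (\<tau> k)) + norm (muhat (\<tau> k) - mustar k)"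
      using norm_triangle_ineq[of "mustar j - x i" "x i - muhat (\<tau> k)"]
        norm_triangle_ineq[of "mustar j - muhat (\<tau> k)" "muhat (\<tau> k) - mustar k"] by simp
    also have "\<dots> \<le> r + (r + \<delta>) + \<delta>"
      using A m_small[OF k(1)] unfolding r_def by (simp add: norm_minus_commute)
    finally show "s / 2 - \<delta> \<le> norm (x i - mustar (ystar i))" unfolding r_def j_def by simp
  qed
  have card_le: "card {i\<in>{1..n}. yhat i \<noteq> \<tau> (ystar i)} \<le> card {i\<in>{1..n}. norm (x i - mustar (ystar i)) \<ge> s / 2 - \<delta>}"
    by (rule card_mono[OF _ sub]) simp
  have markov: "real (card {i\<in>{1..n}. norm (x i - mustar (ystar i)) \<ge> s / 2 - \<delta>}) \<le> Lstar / (s / 2 - \<delta>)\<^sup>2"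
  proof -
    let ?S = "{i\<in>{1..n}. norm (x i - mustar (ystar i)) \<ge> t}"
    have "real (card ?S) * t\<^sup>2 \<le> (\<Sum>i\<in>?S. (norm (x i - mustar (ystar i)))\<^sup>2)"
      using t_pos by (intro sum_bounded_below) (auto intro: power_mono)
    also have "\<dots> \<le> Lstar" unfolding Lstar_def kmeans_loss_def
      by (intro sum_mono2) auto
    finally show ?thesis using t_pos unfolding t_def[symmetric] by (simp add: field_simps)
  qed
  have final1: "(\<Sum>j\<in>{1..K}. (norm (mustar j - muhat (\<tau> j)))\<^sup>2) \<le> (1 + sqrt C)\<^sup>2 * real K / real nmin * Lstar"
  proof -
    have "P * Lstar / real nmin \<le> P * Lstar / real nmin * real K"
    proof -
      have "0 \<le> P * Lstar / real nmin" using P_pos Lstar_nn nmin_r by simp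
      hence "P * Lstar / real nmin * 1 \<le> P * Lstar / real nmin * real K"
        using K2 by (intro mult_left_mono) auto
      thus ?thesis by simp
    qed
    thus ?thesis using summ unfolding m_def P_def c_def by (simp add: field_simps)
  qed
  show ?thesis using perm final1 sub card_le markov by blast
qed

end
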